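(* Let $n$ be a positive integer, $d\in\Delta(n)$, and write $d=(1,2,\dots,q,q^{(s_q)},(q-1)^{(s_{q-1})},\dots,1^{(s_1)})$ with $q\ge1$ and $s_1,\dots,s_q\ge0$ integers. Let $\overline{\alpha}=(\overline{\alpha}_1,\dots,\overline{\alpha}_q)$ with $\overline{\alpha}_i=q-i+1+\sum_{k=i}^q s_k$, and let $\underline{\alpha}=\overline{\alpha}^*$ be its conjugate partition. Then for every $\alpha\in[\,d\,]$ we have $\overline{\alpha}\succ\alpha\succ\underline{\alpha}$.
   Context: A partition of a positive integer $n$ is a finite non-increasing sequence $\alpha=(\alpha_1,\dots,\alpha_l)$ of positive integers with sum $n$; $\mathcal{P}(n)$ is the set of partitions of $n$, and $\alpha_i=0$ for $i>l$. The diagonal sequence is $\delta(\alpha)=(d_k)_{k\ge1}$, $d_k=|\{i:1\le i\le k,\ \alpha_i+i-1\ge k\}|$ (trailing zeros omitted). $\Delta(n)=\{\delta(\alpha):\alpha\in\mathcal{P}(n)\}$, $[\,d\,]=\{\alpha\in\mathcal{P}(n):\delta(\alpha)=d\}$. Every $d\in\Delta(n)$ has the stated form, where $j^{(s)}$ denotes $s$ consecutive entries equal to $j$. The conjugate $\alpha^*$ of $\alpha$ has parts $\alpha^*_j=|\{i:\alpha_i\ge j\}|$. For $\alpha=(\alpha_1,\dots,\alpha_s),\beta=(\beta_1,\dots,\beta_t)\in\mathcal{P}(n)$, $\alpha\succ\beta$ ($\alpha$ majorizes $\beta$) means $\sum_{i=1}^k\alpha_i\ge\sum_{i=1}^k\beta_i$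 for all $1\le k\le\min\{s,t\}$. *)

theory Defs
  imports Main
begin

definition part_nth :: "nat list \<Rightarrow> nat \<Rightarrow> nat" where
  "part_nth a i = (if 1 \<le> i \<and> i \<le> length a then a ! (i - 1) else 0)"

definition is_partition :: "nat \<Rightarrow> nat list \<Rightarrow> bool" where
  "is_partition n a \<longleftrightarrow> sorted_wrt (\<ge>) a \<and> (\<forall>x\<in>set a. 0 < x) \<and> sum_list a = n"

definition partitions :: "nat \<Rightarrow> nat list set" where
  "partitions n = {a. is_partition n a}"

definition diag_entry :: "nat list \<Rightarrow> nat \<Rightarrow> nat" where
  "diag_entry a k = card {i. 1 \<le> i \<and> i \<le> k \<and> part_nth a i + i - 1 \<ge> k}"

text \<open>The diagonal sequence with trailing zeros omitted. All d_k with
  k > length a + sum_list a vanish, so listing k = 1 .. length a + sum_list a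
  and dropping trailing zeros gives the whole sequence.\<close>
definition delta :: "nat list \<Rightarrow> nat list" where
  "delta a = rev (dropWhile (\<lambda>x. x = 0)
      (rev (map (diag_entry a) [1..<length a + sum_list a + 1])))"

definition Delta :: "nat \<Rightarrow> nat list set" where
  "Delta n = delta ` partitions n"

definition diag_class :: "nat \<Rightarrow> nat list \<Rightarrow> nat list set" where
  "diag_class n d = {a \<in> partitions n. delta a = d}"

definition conjugate :: "nat list \<Rightarrow> nat list" where
  "conjugate a = map (\<lambda>j. card {i. 1 \<le> i \<and> i \<le> length a \<and> part_nth a i \<ge> j})
              [1..<part_nth a 1 + 1]"

definition majorizes :: "nat list \<Rightarrow> nat list \<Rightarrow> bool" where
  "majorizes a b \<longleftrightarrow> (\<forall>k. 1 \<le> k \<and> k \<le> min (length a) (length b) \<longrightarrow>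
      sum_list (take k b) \<le> sum_list (take k a))"

definition diag_form :: "nat \<Rightarrow> (nat \<Rightarrow> nat) \<Rightarrow> nat list" where
  "diag_form q s = [1..<q+1] @ concat (map (\<lambda>j. replicate (s j) j) (rev [1..<q+1]))"

definition alpha_bar :: "nat \<Rightarrow> (nat \<Rightarrow> nat) \<Rightarrow> nat list" where
  "alpha_bar q s = map (\<lambda>i. q - i + 1 + (\<Sum>k = i..q. s k)) [1..<q+1]"

end

theory Submission
  imports Defs
begin

definition cells :: "nat list \<Rightarrow> (nat \<times> nat) set" where
  "cells a = {(i,j). 1 \<le> i \<and> i \<le> length a \<and> 1 \<le> j \<and> j \<le> part_nth a i}"

lemma part_nth_le_sum: "part_nth a i \<le> sum_list a"
  unfolding part_nth_def using elem_le_sum_list[of "i - 1" a] by auto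

lemma part_nth_mono:
  assumes "sorted_wrt (\<ge>) a" "1 \<le> i" "i \<le> i'"
  shows "part_nth a i' \<le> part_nth a i"
proof (cases "i' \<le> length a")
  case True
  show ?thesis
  proof (cases "i = i'")
    case False
    then have "i - 1 < i' - 1" using assms by auto
    then show ?thesis using sorted_wrt_nth_less[OF assms(1) \<open>i - 1 < i' - 1\<close>] True assms
      unfolding part_nth_def by auto
  qed simp
next
  case False
  then show ?thesis unfolding part_nth_def by auto
qed

lemma cells_sub: "cells a \<subseteq> {1..length a} \<times> {1..sum_list a}"
  unfolding cells_def using part_nth_le_sum[of a] by (auto intro: order_trans[OF _ part_nth_le_sum])

lemma finite_cells: "finite (cells a)"
  using cells_sub finite_subset by blast

lemma card_cells_rows:
  assumes "k \<le> length a"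
  shows "card {x\<in>cells a. fst x \<le> k} = sum (part_nth a) {1..k}"
proof -
  have "{x\<in>cells a. fst x \<le> k} = Sigma {1..k} (\<lambda>i. {1..part_nth a i})"
    using assms unfolding cells_def by auto
  then show ?thesis by simp
qed

lemma antidiag:
  assumes "1 \<le> m"
  shows "card {x \<in> cells a. fst x + snd x = m+1} = diag_entry a m"
proof -
  let ?T = "{i. 1 \<le> i \<and> i \<le> m \<and> part_nth a i + i - 1 \<ge> m}"
  have "{x \<in> cells a. fst x + snd x = m+1} = (\<lambda>i. (i, m+1-i)) ` ?T"
  proof (rule set_eqI, rule iffI)
    fix x assume "x \<in> {x \<in> cells a. fst x + snd x = m+1}"
    then show "x \<in> (\<lambda>i. (i, m+1-i)) ` ?T" unfolding cells_def
      by (cases x) (auto intro!: image_eqI)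
  next
    fix x assume "x \<in> (\<lambda>i. (i, m+1-i)) ` ?T"
    then obtain i where i: "x = (i, m+1-i)" "1 \<le> i" "i \<le> m" "part_nth a i + i - 1 \<ge> m" by auto
    then have "part_nth a i > 0" by auto
    then have "i \<le> length a" unfolding part_nth_def by (auto split: if_splits)
    then show "x \<in> {x \<in> cells a. fst x + snd x = m+1}" using i unfolding cells_def by auto
  qed
  moreover have "inj_on (\<lambda>i. (i, m+1-i)) ?T" by (auto intro: inj_onI)
  ultimately show ?thesis unfolding diag_entry_def by (simp add: card_image)
qed

lemma group_card:
  assumes "S \<subseteq> cells a"
  shows "card S = sum (\<lambda>m. card {x\<in>S. fst x + snd x = m+1}) {1..length a + sum_list a}"
proof -
  have fS: "finite S" using assms finite_cells finite_subset by blast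
  have "(\<lambda>x. fst x + snd x - 1) ` S \<subseteq> {1..length a + sum_list a}"
    using assms cells_sub[of a] by force
  from sum.group[OF fS _ this, of "\<lambda>_. 1::nat"]
  have "sum (\<lambda>m. sum (\<lambda>_. 1::nat) {x\<in>S. fst x + snd x - 1 = m}) {1..length a + sum_list a} = card S"
    by simp
  moreover have "{x\<in>S. fst x + snd x - 1 = m} = {x\<in>S. fst x + snd x = m+1}" if "1 \<le> m" for m
    using that by auto
  ultimately show ?thesis by (metis (no_types, lifting) atLeastAtMost_iff card_eq_sum sum.cong)
qed

lemma bound_card:
  assumes "S \<subseteq> cells a" "(\<forall>x\<in>S. fst x \<le> K) \<or> (\<forall>x\<in>S. snd x \<le> K)"
  shows "card S \<le> sum (\<lambda>m. min (diag_entry a m) K) {1..length a + sum_list a}"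
proof -
  have "card {x\<in>S. fst x + snd x = m+1} \<le> min (diag_entry a m) K" if "1 \<le> m" for m
  proof -
    have "card {x\<in>S. fst x + snd x = m+1} \<le> card {x \<in> cells a. fst x + snd x = m+1}"
      by (rule card_mono) (use assms finite_cells in auto)
    moreover have "card {x\<in>S. fst x + snd x = m+1} \<le> K"
      using assms(2)
    proof
      assume h: "\<forall>x\<in>S. fst x \<le> K"
      have "{x\<in>S. fst x + snd x = m+1} \<subseteq> (\<lambda>i. (i, m+1-i)) ` {1..K}"
        using h assms(1) unfolding cells_def by (force intro!: image_eqI)
      then show ?thesis by (metis (no_types, lifting) card_atLeastAtMost card_image_le card_mono diff_Suc_1 finite_atLeastAtMost finite_imageI order_trans)
    next
      assume h: "\<forall>x\<in>S. snd x \<le> K"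
      have "{x\<in>S. fst x + snd x = m+1} \<subseteq> (\<lambda>j. (m+1-j, j)) ` {1..K}"
        using h assms(1) unfolding cells_def by (force intro!: image_eqI)
      then show ?thesis by (metis (no_types, lifting) card_atLeastAtMost card_image_le card_mono diff_Suc_1 finite_atLeastAtMost finite_imageI order_trans)
    qed
    ultimately show ?thesis using antidiag[OF that] by simp
  qed
  then show ?thesis unfolding group_card[OF assms(1)] by (intro sum_mono) auto
qed

lemma card_cells: "card (cells a) = sum (diag_entry a) {1..length a + sum_list a}"
  using group_card[of "cells a" a] antidiag by simp

lemma sum_min_swap:
  assumes "finite M"
  shows "sum (\<lambda>m. min (e m) K) M = sum (\<lambda>i. card {m\<in>M. i \<le> e m}) {1..(K::nat)}"
proof -
  have "sum (\<lambda>m. min (e m) K) M = sum (\<lambda>m. sum (\<lambda>i. if i \<le> e m then 1 else 0) {1..K}) M"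
  proof (rule sum.cong)
    fix m
    have "sum (\<lambda>i. if i \<le> e m then 1 else (0::nat)) {1..K} = card {i\<in>{1..K}. i \<le> e m}"
      by (simp add: sum.If_cases Int_def)
    also have "{i\<in>{1..K}. i \<le> e m} = {1..min (e m) K}" by auto
    finally show "min (e m) K = sum (\<lambda>i. if i \<le> e m then 1 else (0::nat)) {1..K}" by simp
  qed simp
  also have "\<dots> = sum (\<lambda>i. sum (\<lambda>m. if i \<le> e m then 1 else 0) M) {1..K}"
    by (rule sum.swap)
  also have "\<dots> = sum (\<lambda>i. card {m\<in>M. i \<le> e m}) {1..K}"
    using assms by (simp add: sum.If_cases Int_def conj_commute)
  finally show ?thesis .
qed


declare upt_Suc[simp del]

lemma filter_dropWhile0: "\<not> P 0 \<Longrightarrow> filter P (dropWhile (\<lambda>x. x = (0::nat)) ys) = filter P ys"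
  by (induct ys) auto

lemma length_filter_delta:
  "\<not> P 0 \<Longrightarrow> length (filter P (delta a)) = card {m\<in>{1..length a + sum_list a}. P (diag_entry a m)}"
proof -
  assume h: "\<not> P 0"
  let ?N = "length a + sum_list a"
  have "length (filter P (delta a)) = length (filter P (map (diag_entry a) [1..<?N+1]))"
    unfolding delta_def rev_filter[symmetric] using filter_dropWhile0[of P, OF h]
    by (metis length_rev rev_filter)
  also have "\<dots> = length (filter (P \<circ> diag_entry a) [1..<?N+1])" by (simp add: filter_map)
  also have "\<dots> = card ({x. (P \<circ> diag_entry a) x} \<inter> set [1..<?N+1])"
    by (rule distinct_length_filter) simp
  also have "{x. (P \<circ> diag_entry a) x} \<inter> set [1..<?N+1] = {m\<in>{1..?N}. P (diag_entry a m)}" by auto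
  finally show ?thesis .
qed

lemma length_filter_upt: "length (filter P [l..<u]) = card {m\<in>{l..<u}. P m}"
proof -
  have "length (filter P [l..<u]) = card ({x. P x} \<inter> set [l..<u])"
    by (rule distinct_length_filter) simp
  also have "{x. P x} \<inter> set [l..<u] = {m\<in>{l..<u}. P m}" by auto
  finally show ?thesis .
qed

lemma diag_form_count:
  assumes "1 \<le> i"
  shows "length (filter (\<lambda>x. i \<le> x) (diag_form q s)) = (q + 1 - i) + sum s {i..q}"
proof -
  have c1: "length (filter (\<lambda>x. i \<le> x) [1..<q+1]) = q + 1 - i"
  proof -
    have "length (filter (\<lambda>x. i \<le> x) [1..<q+1]) = card {m\<in>{1..<q+1}. i \<le> m}"
      by (rule length_filter_upt)
    also have "{m\<in>{1..<q+1}. i \<le> m} = {i..<q+1}" using assms by auto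
    finally show ?thesis by simp
  qed
  have "length (filter (\<lambda>x. i \<le> x) (concat (map (\<lambda>j. replicate (s j) j) (rev [1..<q+1]))))
      = sum_list (map (\<lambda>j. if i \<le> j then s j else 0) (rev [1..<q+1]))"
    by (induct q) (auto simp: filter_concat upt_Suc)
  also have "\<dots> = sum_list (map (\<lambda>j. if i \<le> j then s j else 0) [1..<q+1])"
    by (simp add: rev_map[symmetric])
  also have "\<dots> = sum (\<lambda>j. if i \<le> j then s j else 0) {1..<q+1}"
    by (simp add: sum_set_upt_conv_sum_list_nat[symmetric])
  also have "\<dots> = sum s {i..q}"
  proof -
    have "sum (\<lambda>j. if i \<le> j then s j else 0) {1..<q+1} = sum s {j\<in>{1..<q+1}. i \<le> j}"
      by (rule sum.inter_filter[symmetric]) simp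
    also have "{j\<in>{1..<q+1}. i \<le> j} = {i..q}" using assms by auto
    finally show ?thesis .
  qed
  finally show ?thesis unfolding diag_form_def using c1 by simp
qed

lemma sum_list_take_part:
  "k \<le> length a \<Longrightarrow> sum_list (take k a) = sum (part_nth a) {1..k}"
proof (induct k)
  case (Suc k)
  then have "take (Suc k) a = take k a @ [a ! k]" by (simp add: take_Suc_conv_app_nth)
  moreover have "part_nth a (Suc k) = a ! k" using Suc.prems unfolding part_nth_def by auto
  ultimately show ?case using Suc by simp
qed simp

lemma sum_list_take_map_upt:
  "k \<le> u \<Longrightarrow> sum_list (take k (map f [1..<u+1])) = sum f {1..k}"
proof -
  assume "k \<le> u"
  then have "take k [1..<u+1] = [1..<1+k]" by (intro take_upt) simp
  then have "take k (map f [1..<u+1]) = map f [1..<k+1]" by (simp add: take_map del: upt_Suc)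
  then show ?thesis by (simp add: sum_set_upt_conv_sum_list_nat[symmetric] atLeastLessThanSuc_atLeastAtMost)
qed

lemma arith_lemma:
  fixes c :: "nat \<Rightarrow> nat"
  assumes "\<forall>i>q. c i = 0"
  shows "sum (\<lambda>i. min (c i) k) {1..q} + sum c {1..J} \<le> sum c {1..q} + k * J"
proof (cases "J \<le> q")
  case True
  have sp: "{1..q} = {1..J} \<union> {J+1..q}" using True by auto
  have d: "{1..J} \<inter> {J+1..q} = {}" by auto
  have "sum (\<lambda>i. min (c i) k) {1..J} \<le> k * J"
    using sum_mono[of "{1..J}" "\<lambda>i. min (c i) k" "\<lambda>_. k"] by (simp add: mult.commute)
  moreover have "sum (\<lambda>i. min (c i) k) {J+1..q} \<le> sum c {J+1..q}" by (rule sum_mono) simp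
  moreover have g: "sum g {1..q} = sum g {1..J} + sum g {J+1..q}" for g :: "nat \<Rightarrow> nat"
    unfolding sp by (rule sum.union_disjoint[OF _ _ d]) auto
  ultimately show ?thesis using g[of c] g[of "\<lambda>i. min (c i) k"] by linarith
next
  case False
  have sp: "{1..J} = {1..q} \<union> {q+1..J}" using False by auto
  have d: "{1..q} \<inter> {q+1..J} = {}" by auto
  have z: "sum c {q+1..J} = 0" using assms by simp
  have "sum (\<lambda>i. min (c i) k) {1..q} \<le> k * q"
    using sum_mono[of "{1..q}" "\<lambda>i. min (c i) k" "\<lambda>_. k"] by (simp add: mult.commute)
  moreover have "k * q \<le> k * J" using False by simp
  moreover have "sum c {1..J} = sum c {1..q} + sum c {q+1..J}"
    unfolding sp by (rule sum.union_disjoint[OF _ _ d]) auto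
  ultimately show ?thesis using z by linarith
qed


theorem proposition3p1:
  fixes n q :: nat and s :: "nat \<Rightarrow> nat" and d alpha :: "nat list"
  assumes "0 < n"
    and "d \<in> Delta n"
    and "1 \<le> q"
    and "d = diag_form q s"
    and "alpha \<in> diag_class n d"
  shows "majorizes (alpha_bar q s) alpha \<and> majorizes alpha (conjugate (alpha_bar q s))"
proof -
  define a where "a = alpha"
  have part: "is_partition n a" and dl: "delta a = diag_form q s"
    using assms(4,5) unfolding a_def diag_class_def partitions_def by auto
  have sorted: "sorted_wrt (\<ge>) a" using part unfolding is_partition_def by simp
  define N where "N = length a + sum_list a"
  define e where "e = diag_entry a"
  define c where "c i = card {m\<in>{1..N}. i \<le> e m}" for i
  define F where "F i = q - i + 1 + (\<Sum>k = i..q. s k)" for i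
  define ab where "ab = alpha_bar q s"
  have abF: "ab = map F [1..<q+1]" unfolding ab_def alpha_bar_def F_def by simp
  have hc: "c i = q + 1 - i + sum s {i..q}" if "1 \<le> i" for i
  proof -
    have "c i = length (filter (\<lambda>x. i \<le> x) (delta a))"
      unfolding c_def e_def N_def using that by (subst length_filter_delta) auto
    then show ?thesis using dl diag_form_count[OF that] by simp
  qed
  have hc0: "\<forall>i>q. c i = 0" using hc by simp
  have cF: "F i = c i" if "1 \<le> i" "i \<le> q" for i using hc[OF that(1)] that unfolding F_def by simp
  have len_ab: "length ab = q" unfolding abF by simp
  have pab: "part_nth ab i = c i" if "1 \<le> i" "i \<le> q" for i
  proof -
    have "ab ! (i - 1) = F i" unfolding abF using that by (simp add: nth_upt)
    then show ?thesis using that cF len_ab unfolding part_nth_def by simp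
  qed
  have he: "e m \<le> q" if "m \<in> {1..N}" for m
  proof (rule ccontr)
    assume "\<not> e m \<le> q"
    then have "m \<in> {m\<in>{1..N}. q + 1 \<le> e m}" using that by auto
    then have "c (q+1) > 0" unfolding c_def by (auto simp: card_gt_0_iff)
    then show False using hc0 by simp
  qed
  have smin: "sum (\<lambda>m. min (e m) K) {1..N} = sum c {1..K}" for K
    unfolding c_def by (rule sum_min_swap) simp
  have ccells: "card (cells a) = sum c {1..q}"
  proof -
    have "card (cells a) = sum e {1..N}" unfolding e_def N_def by (rule card_cells)
    also have "\<dots> = sum (\<lambda>m. min (e m) q) {1..N}" using he by (intro sum.cong) auto
    finally show ?thesis using smin by simp
  qed
  have rows: "sum_list (take k a) = card {x\<in>cells a. fst x \<le> k}" if "k \<le> length a" for k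
    using sum_list_take_part[OF that] card_cells_rows[OF that] by simp
  have P1: "majorizes ab a"
    unfolding majorizes_def
  proof (intro allI impI)
    fix k assume k: "1 \<le> k \<and> k \<le> min (length ab) (length a)"
    have "sum_list (take k a) = card {x\<in>cells a. fst x \<le> k}" using k rows by simp
    also have "\<dots> \<le> sum (\<lambda>m. min (e m) k) {1..N}"
      unfolding e_def N_def by (rule bound_card) auto
    also have "\<dots> = sum c {1..k}" by (rule smin)
    also have "\<dots> = sum F {1..k}" using k len_ab cF by (intro sum.cong) auto
    also have "\<dots> = sum_list (take k ab)" unfolding abF using k len_ab sum_list_take_map_upt[of k q F]
      by simp
    finally show "sum_list (take k a) \<le> sum_list (take k ab)" .
  qed
  define G where "G j = card {i. 1 \<le> i \<and> i \<le> length ab \<and> part_nth ab i \<ge> j}" for j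
  have conjG: "conjugate ab = map G [1..<part_nth ab 1 + 1]"
    unfolding conjugate_def G_def by simp
  have P2: "majorizes a (conjugate ab)"
    unfolding majorizes_def
  proof (intro allI impI)
    fix k assume k: "1 \<le> k \<and> k \<le> min (length a) (length (conjugate ab))"
    have kL: "k \<le> length a" using k by simp
    have kP: "k \<le> part_nth ab 1" using k conjG by simp
    have "sum_list (take k (conjugate ab)) = sum G {1..k}"
      unfolding conjG using kP sum_list_take_map_upt[of k "part_nth ab 1" G] by simp
    also have "\<dots> = sum (\<lambda>j. card {i\<in>{1..q}. j \<le> part_nth ab i}) {1..k}"
      unfolding G_def len_ab by (intro sum.cong) (auto intro: arg_cong[where f = card])
    also have "\<dots> = sum (\<lambda>i. min (part_nth ab i) k) {1..q}"
      by (rule sum_min_swap[symmetric]) simp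
    also have "\<dots> = sum (\<lambda>i. min (c i) k) {1..q}" using pab by (intro sum.cong) auto
    finally have lhs: "sum_list (take k (conjugate ab)) = sum (\<lambda>i. min (c i) k) {1..q}" .
    define J where "J = part_nth a (k+1)"
    define A where "A = {x\<in>cells a. fst x \<le> k}"
    define R where "R = {x\<in>cells a. k < fst x}"
    define B where "B = {x\<in>cells a. snd x \<le> J}"
    have fin: "finite (cells a)" by (rule finite_cells)
    have "A \<union> R = cells a" "A \<inter> R = {}" unfolding A_def R_def by auto
    then have cAR: "card A + card R = card (cells a)"
      using card_Un_disjoint[of A R] fin unfolding A_def R_def by fastforce
    have BU: "B = R \<union> ({1..k} \<times> {1..J})"
    proof (rule set_eqI, rule iffI)
      fix x assume "x \<in> B"
      then show "x \<in> R \<union> ({1..k} \<times> {1..J})" unfolding B_def R_def cells_def by auto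
    next
      fix x assume x: "x \<in> R \<union> ({1..k} \<times> {1..J})"
      show "x \<in> B"
      proof (cases "x \<in> R")
        case True
        then obtain i j where "x = (i,j)" "1 \<le> i" "i \<le> length a" "1 \<le> j" "j \<le> part_nth a i" "k < i"
          unfolding R_def cells_def by auto
        moreover have "part_nth a i \<le> J" unfolding J_def
          using part_nth_mono[OF sorted, of "k+1" i] \<open>k < i\<close> by simp
        ultimately show ?thesis unfolding B_def cells_def by auto
      next
        case False
        then obtain i j where ij: "x = (i,j)" "1 \<le> i" "i \<le> k" "1 \<le> j" "j \<le> J" using x by auto
        have "J \<le> part_nth a i" unfolding J_def
          using part_nth_mono[OF sorted, of i "k+1"] ij by simp
        then show ?thesis using ij kL unfolding B_def cells_def by auto
      qed
    qed
    have "R \<inter> ({1..k} \<times> {1..J}) = {}" unfolding R_def by auto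
    then have cB: "card B = card R + k * J" unfolding BU
      using fin by (subst card_Un_disjoint) (auto simp: R_def)
    have "card B \<le> sum (\<lambda>m. min (e m) J) {1..N}"
      unfolding e_def N_def B_def by (rule bound_card) auto
    then have cB2: "card B \<le> sum c {1..J}" using smin by simp
    have "sum (\<lambda>i. min (c i) k) {1..q} + sum c {1..J} \<le> sum c {1..q} + k * J"
      by (rule arith_lemma[OF hc0])
    then have "sum (\<lambda>i. min (c i) k) {1..q} \<le> card A"
      using cAR cB cB2 ccells by linarith
    then show "sum_list (take k (conjugate ab)) \<le> sum_list (take k a)"
      using lhs rows[OF kL] unfolding A_def by simp
  qed
  show ?thesis using P1 P2 unfolding a_def ab_def by simp
qed

end
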